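(* If $\det\begin{pmatrix}\mathcal{D}_\alpha X^I\\ X^I\end{pmatrix}\neq 0$ and $\mathcal{D}_{\bar\alpha}\begin{pmatrix}X^I\\ F_I\end{pmatrix}=0$, then there exist functions $\tilde F_I(X^J)$ such that $\tilde F_I(X^J(z,\bar z))=F_I(z,\bar z)$ and $\tilde F_I=X^J\partial_J\tilde F_I$ (i.e. $\tilde F_I$ is homogeneous of first degree in $X$).
   Context: $X^I(z,\bar z)$, $F_I(z,\bar z)$ ($I=0,\dots,n$) are components of a $2(n+1)$-vector over an $n$-dimensional Kähler manifold with coordinates $z^\alpha$ and Kähler potential $K$; $\mathcal{D}_\alpha=\partial_\alpha+\tfrac12\partial_\alpha K$ and $\mathcal{D}_{\bar\alpha}=\partial_{\bar\alpha}-\tfrac12\partial_{\bar\alpha}K$ act on them; $X^0\neq0$ is assumed; $\partial_J=\partial/\partial X^J$. *)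

theory Defs
  imports "HOL-Analysis.Analysis"
begin

text \<open>Symplectic-vector components are indexed by 'n option:
  None plays the role of I = 0 and Some alpha of I = alpha.\<close>

definition wirt :: "(complex^'n \<Rightarrow> complex) \<Rightarrow> 'n \<Rightarrow> complex^'n \<Rightarrow> complex" where
  "wirt f a z = (frechet_derivative f (at z) (axis a 1)
                 - \<i> * frechet_derivative f (at z) (axis a \<i>)) / 2"

definition cwirt :: "(complex^'n \<Rightarrow> complex) \<Rightarrow> 'n \<Rightarrow> complex^'n \<Rightarrow> complex" where
  "cwirt f a z = (frechet_derivative f (at z) (axis a 1)
                 + \<i> * frechet_derivative f (at z) (axis a \<i>)) / 2"

definition covD :: "(complex^'n \<Rightarrow> real) \<Rightarrow> (complex^'n \<Rightarrow> complex) \<Rightarrow> 'n \<Rightarrow> complex^'n \<Rightarrow> complex" where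
  "covD K f a z = wirt f a z + wirt (\<lambda>w. complex_of_real (K w)) a z * f z / 2"

definition covDbar :: "(complex^'n \<Rightarrow> real) \<Rightarrow> (complex^'n \<Rightarrow> complex) \<Rightarrow> 'n \<Rightarrow> complex^'n \<Rightarrow> complex" where
  "covDbar K f a z = cwirt f a z - cwirt (\<lambda>w. complex_of_real (K w)) a z * f z / 2"

definition XMatrix :: "(complex^'n \<Rightarrow> real) \<Rightarrow> (complex^'n \<Rightarrow> complex^'n option) \<Rightarrow> complex^'n
     \<Rightarrow> complex^'n option^'n option" where
  "XMatrix K X z = (\<chi> r c. case r of None \<Rightarrow> X z $ c | Some a \<Rightarrow> covD K (\<lambda>w. X w $ c) a z)"

definition holo_on :: "(complex^'m \<Rightarrow> complex) \<Rightarrow> (complex^'m) set \<Rightarrow> bool" where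
  "holo_on g W \<longleftrightarrow> (\<forall>x\<in>W. \<exists>D::complex^'m. (g has_derivative (\<lambda>h. \<Sum>J\<in>UNIV. h $ J * D $ J)) (at x))"

definition cpartial :: "(complex^'m \<Rightarrow> complex) \<Rightarrow> 'm \<Rightarrow> complex^'m \<Rightarrow> complex" where
  "cpartial g J x = frechet_derivative g (at x) (axis J 1)"

end

theory Submission
  imports Defs "HOL-Complex_Analysis.Complex_Analysis"
begin

lemma axis_split: "axis a (x::complex) = Re x *\<^sub>R axis a 1 + Im x *\<^sub>R axis a \<i>"
  by (simp add: vec_eq_iff axis_def complex_eq_iff)

lemma vec_sum_axis: "(v::'a::comm_monoid_add^'n) = (\<Sum>a\<in>UNIV. axis a (v$a))"
  by (simp add: vec_eq_iff axis_def sum.delta)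

lemma clin_sum:
  fixes D :: "complex^'n \<Rightarrow> complex"
  assumes "linear D" and "\<And>a. D (axis a \<i>) = \<i> * D (axis a 1)"
  shows "D v = (\<Sum>a\<in>UNIV. v$a * D (axis a 1))"
proof -
  have "D v = (\<Sum>a\<in>UNIV. D (axis a (v$a)))"
    by (subst vec_sum_axis) (simp add: linear_sum[OF assms(1)])
  also have "\<dots> = (\<Sum>a\<in>UNIV. v$a * D (axis a 1))"
  proof (rule sum.cong[OF refl])
    fix a
    have "D (axis a (v$a)) = Re (v$a) *\<^sub>R D (axis a 1) + Im (v$a) *\<^sub>R D (axis a \<i>)"
      by (subst axis_split) (simp add: linear_add[OF assms(1)] linear_scale[OF assms(1)])
    also have "\<dots> = v$a * D (axis a 1)"
      using assms(2) by (simp add: scaleR_conv_of_real complex_eq_iff algebra_simps)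
    finally show "D (axis a (v$a)) = v$a * D (axis a 1)" .
  qed
  finally show ?thesis .
qed

lemma has_derivative_vecI:
  fixes f :: "'a::real_normed_vector \<Rightarrow> 'b::euclidean_space^'n"
  assumes "\<And>i. ((\<lambda>x. f x $ i) has_derivative (\<lambda>v. f' v $ i)) F"
  shows "(f has_derivative f') F"
proof -
  have e: "f = (\<lambda>x. \<Sum>i\<in>UNIV. axis i (f x $ i))" "f' = (\<lambda>x. \<Sum>i\<in>UNIV. axis i (f' x $ i))"
    by (auto intro: vec_sum_axis)
  have bl: "bounded_linear (axis i :: 'b \<Rightarrow> 'b^'n)" for i
    unfolding linear_conv_bounded_linear[symmetric]
    by (rule linearI) (auto simp: axis_def vec_eq_iff)
  show ?thesis
    apply (subst e(1), subst e(2))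
    apply (rule has_derivative_sum)
    using bounded_linear.has_derivative[OF bl assms] by simp
qed

lemma frechet_Kc:
  assumes "K differentiable (at z)"
  shows "frechet_derivative (\<lambda>w. complex_of_real (K w)) (at z) = (\<lambda>v. complex_of_real (frechet_derivative K (at z) v))"
proof -
  have "(K has_derivative frechet_derivative K (at z)) (at z)"
    using assms frechet_derivative_works by blast
  then have "((\<lambda>w. complex_of_real (K w)) has_derivative (\<lambda>v. complex_of_real (frechet_derivative K (at z) v))) (at z)"
    by (rule has_derivative_of_real)
  then show ?thesis by (rule frechet_derivative_at[symmetric])
qed

lemma holo_factor:
  fixes K :: "complex^'n \<Rightarrow> real" and u :: "complex^'n \<Rightarrow> complex"
  assumes dK: "K differentiable (at z)" and du: "u differentiable (at z)"
    and hol: "\<forall>a. covDbar K u a z = 0"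
  defines "hu \<equiv> (\<lambda>w. complex_of_real (exp (- K w / 2)) * u w)"
  shows "(hu has_derivative (\<lambda>v. \<Sum>a\<in>UNIV. v$a * frechet_derivative hu (at z) (axis a 1))) (at z)"
proof -
  define DK where "DK = frechet_derivative K (at z)"
  define DU where "DU = frechet_derivative u (at z)"
  have hK: "(K has_derivative DK) (at z)" using dK frechet_derivative_works DK_def by blast
  have hU: "(u has_derivative DU) (at z)" using du frechet_derivative_works DU_def by blast
  define c where "c = complex_of_real (exp (- K z / 2))"
  define E where "E = (\<lambda>v. c * DU v + complex_of_real (exp (- K z / 2) * (- DK v / 2)) * u z)"
  have hE: "(hu has_derivative E) (at z)"
    unfolding hu_def E_def c_def
    by (rule derivative_eq_intros refl hK hU | simp add: fun_eq_iff algebra_simps)+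
  have fE: "frechet_derivative hu (at z) = E" using hE frechet_derivative_at by metis
  have linE: "linear E" using hE has_derivative_linear by blast
  have "E (axis a \<i>) = \<i> * E (axis a 1)" for a
  proof -
    have "covDbar K u a z = 0" using hol by blast
    then have H: "(DU (axis a 1) + \<i> * DU (axis a \<i>)) / 2
       - (complex_of_real (DK (axis a 1)) + \<i> * complex_of_real (DK (axis a \<i>))) / 2 * u z / 2 = 0"
      unfolding covDbar_def cwirt_def frechet_Kc[OF dK] DK_def DU_def .
    have H2: "E (axis a \<i>) - \<i> * E (axis a 1) = - \<i> * c * 2 * ((DU (axis a 1) + \<i> * DU (axis a \<i>)) / 2
       - (complex_of_real (DK (axis a 1)) + \<i> * complex_of_real (DK (axis a \<i>))) / 2 * u z / 2)"
      unfolding E_def c_def by (simp add: field_simps)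
    have gen: "\<And>P Q Y. (P::complex) = Q * Y \<Longrightarrow> Y = 0 \<Longrightarrow> P = 0" by simp
    have "E (axis a \<i>) - \<i> * E (axis a 1) = 0" by (rule gen[OF H2 H])
    then show ?thesis by simp
  qed
  then have "E = (\<lambda>v. \<Sum>a\<in>UNIV. v$a * E (axis a 1))"
    by (intro ext clin_sum[OF linE]) simp
  then show ?thesis unfolding fE by (rule has_derivative_eq_rhs[OF hE])
qed

lemma norm_axis_le: "norm (axis a (w::complex) :: complex^'n) \<le> norm w"
proof -
  have "norm (axis a w :: complex^'n) \<le> (\<Sum>i\<in>UNIV. norm ((axis a w :: complex^'n) $ i))"
    unfolding norm_vec_def by (rule L2_set_le_sum) simp
  also have "\<dots> = (\<Sum>i\<in>UNIV. if i = a then norm w else 0)"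
    by (rule sum.cong) (auto simp: axis_def)
  also have "\<dots> = norm w" by simp
  finally show ?thesis .
qed

lemma holo_line_deriv:
  fixes u :: "complex^'n \<Rightarrow> complex"
  assumes hol: "(u has_derivative (\<lambda>v. \<Sum>b\<in>UNIV. v$b * Du b)) (at (z + axis a w))"
  shows "((\<lambda>w. u (z + axis a w)) has_field_derivative Du a) (at w)"
proof -
  have l: "((\<lambda>w. z + axis a w) has_derivative (\<lambda>h. axis a h)) (at w)"
  proof -
    have bl: "bounded_linear (axis a :: complex \<Rightarrow> complex^'n)"
      unfolding linear_conv_bounded_linear[symmetric]
      by (rule linearI) (auto simp: axis_def vec_eq_iff)
    show ?thesis
      by (rule derivative_eq_intros bounded_linear.has_derivative[OF bl] has_derivative_ident | simp)+
  qed
  have "((\<lambda>w. u (z + axis a w)) has_derivative (\<lambda>h. \<Sum>b\<in>UNIV. (axis a h :: complex^'n)$b * Du b)) (at w)"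
    using has_derivative_compose[OF l hol] by (simp add: o_def)
  moreover have "(\<lambda>h. \<Sum>b\<in>UNIV. (axis a h :: complex^'n)$b * Du b) = (\<lambda>h. Du a * h)"
  proof
    fix h
    have "(\<Sum>b\<in>UNIV. (axis a h :: complex^'n)$b * Du b) = (\<Sum>b\<in>UNIV. if b = a then Du a * h else 0)"
      by (rule sum.cong) (auto simp: axis_def)
    then show "(\<Sum>b\<in>UNIV. (axis a h :: complex^'n)$b * Du b) = Du a * h" by simp
  qed
  ultimately show ?thesis by (simp add: has_field_derivative_def)
qed

lemma bl_axis: "bounded_linear (axis a :: complex \<Rightarrow> complex^'n)"
  unfolding linear_conv_bounded_linear[symmetric]
  by (rule linearI) (auto simp: axis_def vec_eq_iff)

lemma holo_partial_cont:
  fixes u :: "complex^'n \<Rightarrow> complex" and Du :: "complex^'n \<Rightarrow> 'n \<Rightarrow> complex"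
  assumes S: "open S" and hol: "\<And>z. z \<in> S \<Longrightarrow> (u has_derivative (\<lambda>v. \<Sum>b\<in>UNIV. v$b * Du z b)) (at z)"
  shows "continuous_on S (\<lambda>z. Du z a)"
proof (rule continuous_at_imp_continuous_on, rule ballI)
  fix z0 assume z0: "z0 \<in> S"
  obtain e where e: "e>0" "cball z0 e \<subseteq> S" using S open_contains_cball z0 by blast
  define r where "r = e/2"
  have r: "r > 0" using e r_def by simp
  have ucont: "continuous_on S u"
    by (rule continuous_at_imp_continuous_on) (meson hol has_derivative_continuous)
  have acont: "continuous_on A (axis a :: complex \<Rightarrow> complex^'n)" for A
    by (rule linear_continuous_on[OF bl_axis])
  have in_S: "z + axis a w \<in> S" if "z \<in> ball z0 r" "norm w \<le> r" for z w
  proof -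
    have "dist z0 (z + axis a w) \<le> dist z0 z + norm (axis a w :: complex^'n)"
      by (metis dist_norm dist_triangle2 add_diff_cancel_left' norm_minus_commute)
    also have "\<dots> < r + r" using that norm_axis_le[of a w] by simp
    finally show ?thesis using e r_def by auto
  qed
  define \<gamma> where "\<gamma> = circlepath 0 r"
  define I where "I = (\<lambda>z t. u (z + axis a (\<gamma> t)) / (\<gamma> t - 0)^2 * vector_derivative \<gamma> (at t))"
  have eq: "Du z a = 1 / (2 * of_real pi * \<i>) * integral (cbox 0 1) (I z)" if z: "z \<in> ball z0 r" for z
  proof -
    define \<phi> where "\<phi> = (\<lambda>w. u (z + axis a w))"
    have c1: "continuous_on (cball 0 r) \<phi>"
      unfolding \<phi>_def
      by (rule continuous_on_compose2[OF ucont]) (auto intro!: continuous_intros acont in_S[OF z])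
    have d: "(\<phi> has_field_derivative Du (z + axis a w) a) (at w)" if "norm w \<le> r" for w
      unfolding \<phi>_def by (rule holo_line_deriv, rule hol, rule in_S[OF z that])
    have h1: "\<phi> holomorphic_on ball 0 r"
      unfolding holomorphic_on_def field_differentiable_def
    proof
      fix x :: complex assume "x \<in> ball 0 r"
      then have "norm x \<le> r" by simp
      then show "\<exists>f'. (\<phi> has_field_derivative f') (at x within ball 0 r)"
        using d has_field_derivative_at_within by blast
    qed
    have "(\<phi> has_field_derivative (1 / (2 * of_real pi * \<i>) * contour_integral (circlepath 0 r) (\<lambda>u. \<phi> u / (u - 0)^2))) (at 0)"
      by (rule Cauchy_derivative_integral_circlepath(2)[OF c1 h1]) (simp add: r)
    moreover have "(\<phi> has_field_derivative Du z a) (at 0)" 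
    proof -
      have ax0: "(axis a 0 :: complex^'n) = 0" by (simp add: vec_eq_iff axis_def)
      show ?thesis using d[of 0] r by (simp add: ax0)
    qed
    ultimately have "Du z a = 1 / (2 * of_real pi * \<i>) * contour_integral (circlepath 0 r) (\<lambda>u. \<phi> u / (u - 0)^2)"
      using DERIV_unique by blast
    also have "\<dots> = 1 / (2 * of_real pi * \<i>) * integral (cbox 0 1) (I z)"
      unfolding contour_integral_integral I_def \<phi>_def \<gamma>_def cbox_interval ..
    finally show ?thesis .
  qed
  have "continuous_on (ball z0 r) (\<lambda>z. integral (cbox 0 1) (I z))"
  proof (rule integral_continuous_on_param)
    define c where "c = (\<lambda>t::real. complex_of_real r * exp (2 * of_real pi * \<i> * of_real t))"
    have cp: "circlepath 0 r = c" unfolding c_def circlepath by simp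
    have gnz: "c t \<noteq> 0" for t using r by (simp add: c_def)
    have nc: "norm (c t) \<le> r" for t using r by (simp add: c_def norm_mult)
    have cc: "continuous_on A c" for A unfolding c_def by (intro continuous_intros)
    have I_eq: "I z t = u (z + axis a (c t)) / (c t)^2 * (2 * pi * \<i> * r * exp (2 * of_real pi * \<i> * t))" for z t
      unfolding I_def \<gamma>_def vector_derivative_circlepath by (simp add: cp)
    have c1: "continuous_on (ball z0 r \<times> cbox 0 1) (\<lambda>x. u (fst x + axis a (c (snd x))))"
    proof (rule continuous_on_compose2[OF ucont])
      show "continuous_on (ball z0 r \<times> cbox 0 1) (\<lambda>x. fst x + axis a (c (snd x)))"
        by (intro continuous_on_add continuous_on_fst continuous_on_id
              continuous_on_compose2[OF acont] continuous_on_compose2[OF cc] continuous_on_snd) auto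
      show "(\<lambda>x. fst x + axis a (c (snd x))) ` (ball z0 r \<times> cbox 0 1) \<subseteq> S"
        using in_S nc by auto
    qed
    have c2: "continuous_on (ball z0 r \<times> cbox 0 1) (\<lambda>x. c (snd x))"
      by (intro continuous_on_compose2[OF cc] continuous_on_snd continuous_on_id) auto
    show "continuous_on (ball z0 r \<times> cbox 0 1) (\<lambda>(z, t). I z t)"
      unfolding I_eq split_beta
      by (intro continuous_on_mult continuous_on_divide c1 c2 continuous_on_power continuous_intros)
         (auto simp: gnz)
  qed
  then have "continuous_on (ball z0 r) (\<lambda>z. 1 / (2 * of_real pi * \<i>) * integral (cbox 0 1) (I z))"
    by (intro continuous_on_mult continuous_on_const)
  then have "continuous_on (ball z0 r) (\<lambda>z. Du z a)"
    by (rule continuous_on_eq) (simp add: eq)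
  then have "\<forall>x\<in>ball z0 r. isCont (\<lambda>z. Du z a) x"
    by (simp add: continuous_on_eq_continuous_at)
  then show "isCont (\<lambda>z. Du z a) z0" using r by simp
qed

lemma det_rows:
  fixes M :: "'a::field^'k^'k"
  assumes "det M \<noteq> 0" and "\<And>j. (\<Sum>r\<in>UNIV. c$r * M$r$j) = 0"
  shows "c = 0"
proof -
  have lin: "Vector_Spaces.linear (*s) (*s) (\<lambda>c. transpose M *v c)"
    by (rule matrix_vector_mul_linear_gen)
  have "det (matrix (\<lambda>c. transpose M *v c)) \<noteq> 0"
    using assms(1) by (simp only: matrix_of_matrix_vector_mul det_transpose not_False_eq_True)
  then have inj: "inj (\<lambda>c. transpose M *v c)" using det_nz_iff_inj_gen[OF lin] by blast
  have "transpose M *v c = transpose M *v 0"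
    using assms(2) by (simp add: vec_eq_iff matrix_vector_mult_def transpose_def mult.commute)
  then show ?thesis using inj by (simp add: inj_def)
qed

lemma sum_option: "(\<Sum>r\<in>(UNIV::'a option set). f r) = f None + (\<Sum>a\<in>(UNIV::'a::finite set). f (Some a))"
  by (simp add: UNIV_option_conv sum.reindex)

lemma covD_formula:
  fixes K :: "complex^'n \<Rightarrow> real" and hu :: "complex^'n \<Rightarrow> complex"
  assumes dK: "K differentiable (at z)"
    and hh: "(hu has_derivative (\<lambda>v. \<Sum>b\<in>UNIV. v$b * Dh b)) (at z)"
  shows "covD K (\<lambda>w. complex_of_real (exp (K w / 2)) * hu w) a z
     = complex_of_real (exp (K z / 2)) * Dh a
       + wirt (\<lambda>w. complex_of_real (K w)) a z * (complex_of_real (exp (K z / 2)) * hu z)"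
proof -
  define DK where "DK = frechet_derivative K (at z)"
  have hK: "(K has_derivative DK) (at z)" using dK frechet_derivative_works DK_def by blast
  define E where "E = (\<lambda>v. complex_of_real (exp (K z / 2) * (DK v / 2)) * hu z
        + complex_of_real (exp (K z / 2)) * (\<Sum>b\<in>UNIV. v$b * Dh b))"
  have hE: "((\<lambda>w. complex_of_real (exp (K w / 2)) * hu w) has_derivative E) (at z)"
    unfolding E_def
    by (rule derivative_eq_intros refl hK hh | simp add: fun_eq_iff algebra_simps)+
  have fE: "frechet_derivative (\<lambda>w. complex_of_real (exp (K w / 2)) * hu w) (at z) = E"
    using hE frechet_derivative_at by metis
  have s1: "(\<Sum>b\<in>UNIV. (axis a 1 :: complex^'n)$b * Dh b) = Dh a"
  proof -
    have "(\<Sum>b\<in>UNIV. (axis a 1 :: complex^'n)$b * Dh b) = (\<Sum>b\<in>UNIV. if b = a then Dh a else 0)"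
      by (rule sum.cong) (auto simp: axis_def)
    then show ?thesis by simp
  qed
  have s2: "(\<Sum>b\<in>UNIV. (axis a \<i> :: complex^'n)$b * Dh b) = \<i> * Dh a"
  proof -
    have "(\<Sum>b\<in>UNIV. (axis a \<i> :: complex^'n)$b * Dh b) = (\<Sum>b\<in>UNIV. if b = a then \<i> * Dh a else 0)"
      by (rule sum.cong) (auto simp: axis_def)
    then show ?thesis by simp
  qed
  show ?thesis
    unfolding covD_def wirt_def fE frechet_Kc[OF dK] DK_def[symmetric]
    unfolding E_def s1 s2
    by (simp add: field_simps)
qed

lemma inv_clin:
  fixes L :: "'a::field^'m \<Rightarrow> 'a^'m"
  assumes "bij L" "\<And>c w. L (c *s w) = c *s L w"
  shows "inv L (c *s w) = c *s inv L w"
proof -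
  have "L (c *s inv L w) = c *s w" using assms by (simp add: bij_is_surj surj_f_inv_f)
  then have "inv L (c *s w) = inv L (L (c *s inv L w))" by simp
  also have "\<dots> = c *s inv L w" using assms(1) by (simp add: bij_is_inj)
  finally show ?thesis .
qed

lemma axis_i: "(axis a \<i> :: complex^'m) = \<i> *s axis a 1"
  by (simp add: vec_eq_iff axis_def)

lemma holo_from_clin:
  fixes L :: "complex^'m \<Rightarrow> complex^'k"
  assumes "linear L" "\<And>w. L (\<i> *s w) = \<i> *s L w"
  shows "L v $ I = (\<Sum>J\<in>UNIV. v$J * (L (axis J 1) $ I))"
proof -
  have lin: "linear (\<lambda>v. L v $ I)"
    using linear_compose[OF assms(1) bounded_linear.linear[OF bounded_linear_vec_nth]] by (simp add: o_def)
  show ?thesis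
    by (rule clin_sum[OF lin]) (simp add: axis_i assms(2))
qed

lemma scaled_map_deriv:
  fixes q :: "'k::finite \<Rightarrow> complex^'n \<Rightarrow> complex" and y :: "complex^'n option"
  assumes qd: "\<And>I. (q I has_derivative (\<lambda>v. \<Sum>a\<in>UNIV. v$a * Dq I a)) (at (\<chi> a. y $ Some a))"
  shows "((\<lambda>y. \<chi> I. y$None * q I (\<chi> a. y $ Some a)) has_derivative
          (\<lambda>w. \<chi> I. w$None * q I (\<chi> a. y $ Some a) + y$None * (\<Sum>a\<in>UNIV. w$Some a * Dq I a))) (at y)"
proof (rule has_derivative_vecI)
  fix I
  define zof where "zof = (\<lambda>y::complex^'n option. \<chi> a. y $ Some a)"
  have zof_bl: "bounded_linear zof"
    unfolding linear_conv_bounded_linear[symmetric] zof_def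
    by (rule linearI) (auto simp: vec_eq_iff)
  have zof_d: "(zof has_derivative zof) (at y)" by (rule bounded_linear.has_derivative[OF zof_bl has_derivative_ident])
  have c: "((\<lambda>y. q I (zof y)) has_derivative (\<lambda>w. \<Sum>a\<in>UNIV. zof w $a * Dq I a)) (at y)"
  proof -
    have q': "(q I has_derivative (\<lambda>v. \<Sum>a\<in>UNIV. v$a * Dq I a)) (at (zof y))"
      using qd by (simp add: zof_def)
    show ?thesis using has_derivative_compose[OF zof_d q'] by (simp add: o_def)
  qed
  have n: "((\<lambda>y::complex^'n option. y $ None) has_derivative (\<lambda>w. w $ None)) (at y)"
    by (rule bounded_linear.has_derivative[OF bounded_linear_vec_nth has_derivative_ident])
  have "((\<lambda>y. y$None * q I (zof y)) has_derivative
          (\<lambda>w. y$None * (\<Sum>a\<in>UNIV. zof w $a * Dq I a) + w$None * q I (zof y))) (at y)"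
    by (rule has_derivative_mult[OF n c])
  then show "((\<lambda>y. (\<chi> I. y$None * q I (\<chi> a. y $ Some a)) $ I) has_derivative
          (\<lambda>w. (\<chi> I. w$None * q I (\<chi> a. y $ Some a) + y$None * (\<Sum>a\<in>UNIV. w$Some a * Dq I a)) $ I)) (at y)"
    by (simp add: zof_def add.commute)
qed



theorem lemma5:
  fixes U :: "(complex^'n) set"
    and K :: "complex^'n \<Rightarrow> real"
    and X F :: "complex^'n \<Rightarrow> complex^'n option"
  assumes U_open: "open U"
    and K_diff: "\<forall>z\<in>U. K differentiable (at z)"
    and K_diff2: "\<forall>z\<in>U. \<forall>b. (\<lambda>w. cwirt (\<lambda>u. complex_of_real (K u)) b w) differentiable (at z)"
    and Kahler: "\<forall>z\<in>U. \<forall>v::complex^'n. v \<noteq> 0 \<longrightarrow>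
        0 < Re (\<Sum>a\<in>UNIV. \<Sum>b\<in>UNIV.
               wirt (\<lambda>w. cwirt (\<lambda>u. complex_of_real (K u)) b w) a z * v $ a * cnj (v $ b))"
    and X_diff: "\<forall>z\<in>U. \<forall>I. (\<lambda>w. X w $ I) differentiable (at z)"
    and F_diff: "\<forall>z\<in>U. \<forall>I. (\<lambda>w. F w $ I) differentiable (at z)"
    and X0: "\<forall>z\<in>U. X z $ None \<noteq> 0"
    and det_nz: "\<forall>z\<in>U. det (XMatrix K X z) \<noteq> 0"
    and X_hol: "\<forall>z\<in>U. \<forall>a I. covDbar K (\<lambda>w. X w $ I) a z = 0"
    and F_hol: "\<forall>z\<in>U. \<forall>a I. covDbar K (\<lambda>w. F w $ I) a z = 0"
  shows "\<forall>p\<in>U. \<exists>V W (Ft :: complex^'n option \<Rightarrow> complex^'n option).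
           open V \<and> p \<in> V \<and> V \<subseteq> U \<and> open W \<and> X ` V \<subseteq> W \<and>
           (\<forall>I. holo_on (\<lambda>x. Ft x $ I) W) \<and>
           (\<forall>z\<in>V. Ft (X z) = F z) \<and>
           (\<forall>x\<in>W. \<forall>I. Ft x $ I = (\<Sum>J\<in>UNIV. x $ J * cpartial (\<lambda>y. Ft y $ I) J x))"
proof (intro ballI)
  fix p assume p: "p \<in> U"
  define h where "h = (\<lambda>I w. complex_of_real (exp (- K w / 2)) * X w $ I)"
  define f where "f = (\<lambda>I w. complex_of_real (exp (- K w / 2)) * F w $ I)"
  define Dh where "Dh = (\<lambda>z I a. frechet_derivative (h I) (at z) (axis a 1))"
  define Df where "Df = (\<lambda>z I a. frechet_derivative (f I) (at z) (axis a 1))"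
  have hd: "(h I has_derivative (\<lambda>v. \<Sum>a\<in>UNIV. v$a * Dh z I a)) (at z)" if "z \<in> U" for z I
    unfolding h_def Dh_def
    by (rule holo_factor) (use that K_diff X_diff X_hol in auto)
  have fd: "(f I has_derivative (\<lambda>v. \<Sum>a\<in>UNIV. v$a * Df z I a)) (at z)" if "z \<in> U" for z I
    unfolding f_def Df_def
    by (rule holo_factor) (use that K_diff F_diff F_hol in auto)
  have hc: "continuous_on U (\<lambda>z. Dh z I a)" for I a
    by (rule holo_partial_cont[OF U_open hd])
  have hcont: "continuous_on U (h I)" for I
    by (rule continuous_at_imp_continuous_on) (meson hd has_derivative_continuous)
  have Kcont: "continuous_on U K"
    by (rule continuous_at_imp_continuous_on) (meson K_diff differentiable_imp_continuous_within)
  define zof where "zof = (\<lambda>y::complex^'n option. \<chi> a. y $ Some a)"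
  have zof_bl: "bounded_linear zof"
    unfolding linear_conv_bounded_linear[symmetric] zof_def
    by (rule linearI) (auto simp: vec_eq_iff)
  have zof_nth: "zof w $ a = w $ Some a" for w a by (simp add: zof_def)
  have zof_cont: "continuous_on A zof" for A by (rule linear_continuous_on[OF zof_bl])
  have zof_d: "(zof has_derivative zof) (at y)" for y by (rule bounded_linear.has_derivative[OF zof_bl has_derivative_ident])
  define U1 where "U1 = zof -` U"
  have U1_open: "open U1"
    using continuous_on_open_vimage[OF open_UNIV, of zof] zof_cont U_open unfolding U1_def by auto
  define \<Phi> where "\<Phi> = (\<lambda>y. \<chi> I. y$None * h I (zof y))"
  define D\<Phi> where "D\<Phi> = (\<lambda>y w. \<chi> I. w$None * h I (zof y) + y$None * (\<Sum>a\<in>UNIV. w$Some a * Dh (zof y) I a))"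
  define G where "G = (\<lambda>y. \<chi> I. y$None * f I (zof y))"
  define DG where "DG = (\<lambda>y w. \<chi> I. w$None * f I (zof y) + y$None * (\<Sum>a\<in>UNIV. w$Some a * Df (zof y) I a))"
  have d\<Phi>: "(\<Phi> has_derivative D\<Phi> y) (at y)" if "y \<in> U1" for y
    unfolding \<Phi>_def D\<Phi>_def zof_def
    by (rule scaled_map_deriv, rule hd[unfolded zof_def]) (use that in \<open>simp add: U1_def zof_def\<close>)
  have dG: "(G has_derivative DG y) (at y)" if "y \<in> U1" for y
    unfolding G_def DG_def zof_def
    by (rule scaled_map_deriv, rule fd[unfolded zof_def]) (use that in \<open>simp add: U1_def zof_def\<close>)
  have blD: "bounded_linear (D\<Phi> y)" if "y \<in> U1" for y
    using d\<Phi>[OF that] has_derivative_bounded_linear by blast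
  define f' where "f' = (\<lambda>y. Blinfun (D\<Phi> y))"
  have f'_apply: "blinfun_apply (f' y) = D\<Phi> y" if "y \<in> U1" for y
    unfolding f'_def by (rule bounded_linear_Blinfun_apply[OF blD[OF that]])
  have zofU1: "zof ` U1 \<subseteq> U" unfolding U1_def by auto
  have f'_cont: "continuous_on U1 f'"
  proof (rule continuous_on_blinfun_componentwise)
    fix i :: "complex^'n option"
    have "continuous_on U1 (\<lambda>y. D\<Phi> y i)"
      unfolding D\<Phi>_def
      by (intro continuous_intros continuous_on_compose2[OF hcont zof_cont zofU1]
             continuous_on_compose2[OF hc zof_cont zofU1])
    then show "continuous_on U1 (\<lambda>y. blinfun_apply (f' y) i)"
      by (rule continuous_on_eq) (simp add: f'_apply)
  qed
  define y0 where "y0 = (\<chi> I. case I of None \<Rightarrow> complex_of_real (exp (K p / 2)) | Some a \<Rightarrow> p $ a)"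
  have zy0: "zof y0 = p" by (simp add: zof_def y0_def vec_eq_iff)
  have y0U1: "y0 \<in> U1" using p zy0 by (simp add: U1_def)
  have inj0: "inj (D\<Phi> y0)"
  proof -
    define l0 where "l0 = complex_of_real (exp (K p / 2))"
    have l0nz: "l0 \<noteq> 0" by (simp add: l0_def)
    have y0N: "y0 $ None = l0" by (simp add: y0_def l0_def)
    define wK where "wK = (\<lambda>a. wirt (\<lambda>w. complex_of_real (K w)) a p)"
    define M where "M = XMatrix K X p"
    have Xh: "(\<lambda>w. X w $ c) = (\<lambda>w. complex_of_real (exp (K w / 2)) * h c w)" for c
      by (rule ext) (simp add: h_def mult.assoc[symmetric] exp_add[symmetric] flip: of_real_mult)
    have Xp: "X p $ c = l0 * h c p" for c
      using fun_cong[OF Xh[of c], of p] by (simp add: l0_def)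
    have MN: "M $ None $ c = l0 * h c p" for c by (simp add: M_def XMatrix_def Xp)
    have MS: "M $ Some a $ c = l0 * Dh p c a + wK a * (l0 * h c p)" for a c
    proof -
      have "M $ Some a $ c = covD K (\<lambda>w. X w $ c) a p" by (simp add: M_def XMatrix_def)
      also have "\<dots> = covD K (\<lambda>w. complex_of_real (exp (K w / 2)) * h c w) a p" by (simp only: Xh)
      also have "\<dots> = l0 * Dh p c a + wK a * (l0 * h c p)"
        unfolding l0_def wK_def by (rule covD_formula) (use K_diff p hd in auto)
      finally show ?thesis .
    qed
    have detM: "det M \<noteq> 0" using det_nz p by (simp add: M_def)
    have ker: "w = 0" if w0: "D\<Phi> y0 w = 0" for w
    proof -
      have hw: "w$None * h c p + l0 * (\<Sum>a\<in>UNIV. w$Some a * Dh p c a) = 0" for c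
        using w0 by (simp add: D\<Phi>_def vec_eq_iff zy0 y0N)
      define cc where "cc = (\<chi> r. case r of None \<Rightarrow> w$None / l0 - (\<Sum>a\<in>UNIV. w$Some a * wK a) | Some a \<Rightarrow> w$Some a)"
      have "(\<Sum>r\<in>UNIV. cc$r * M$r$j) = 0" for j
      proof -
        have "(\<Sum>r\<in>UNIV. cc$r * M$r$j) = cc$None * M$None$j + (\<Sum>a\<in>UNIV. cc$Some a * M$Some a$j)"
          by (rule sum_option)
        also have "\<dots> = (w$None / l0 - (\<Sum>a\<in>UNIV. w$Some a * wK a)) * (l0 * h j p)
            + (\<Sum>a\<in>UNIV. w$Some a * (l0 * Dh p j a + wK a * (l0 * h j p)))"
          by (simp add: cc_def MN MS)
        also have "(\<Sum>a\<in>UNIV. w$Some a * (l0 * Dh p j a + wK a * (l0 * h j p)))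
            = l0 * (\<Sum>a\<in>UNIV. w$Some a * Dh p j a) + (\<Sum>a\<in>UNIV. w$Some a * wK a) * (l0 * h j p)"
          by (simp add: sum.distrib sum_distrib_left sum_distrib_right algebra_simps)
        also have "(w$None / l0 - (\<Sum>a\<in>UNIV. w$Some a * wK a)) * (l0 * h j p) +
            (l0 * (\<Sum>a\<in>UNIV. w$Some a * Dh p j a) + (\<Sum>a\<in>UNIV. w$Some a * wK a) * (l0 * h j p))
            = w$None * h j p + l0 * (\<Sum>a\<in>UNIV. w$Some a * Dh p j a)"
          using l0nz by (simp add: field_simps)
        also have "\<dots> = 0" by (rule hw)
        finally show ?thesis .
      qed
      then have cc0: "cc = 0" by (rule det_rows[OF detM])
      have wS: "w $ Some a = 0" for a using cc0 by (simp add: vec_eq_iff cc_def) (metis option.simps(5))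
      have "cc $ None = 0" using cc0 by simp
      then have "w $ None = 0" using l0nz by (simp add: cc_def wS)
      then show "w = 0" using wS by (simp add: vec_eq_iff) (metis option.exhaust)
    qed
    have lin: "linear (D\<Phi> y0)" using blD[OF y0U1] bounded_linear.linear by blast
    show ?thesis
    proof (rule inj_onI)
      fix x y assume "D\<Phi> y0 x = D\<Phi> y0 y"
      then have "D\<Phi> y0 (x - y) = 0" by (simp add: linear_diff[OF lin])
      then show "x = y" using ker[of "x - y"] by simp
    qed
  qed
  obtain g0 where g0: "linear g0" "g0 \<circ> D\<Phi> y0 = id"
    using linear_injective_left_inverse[OF bounded_linear.linear[OF blD[OF y0U1]] inj0] by blast
  have g0bl: "bounded_linear g0" using g0(1) linear_conv_bounded_linear by blast
  have invf: "Blinfun g0 o\<^sub>L f' y0 = id_blinfun"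
    by (rule blinfun_eqI) (simp add: bounded_linear_Blinfun_apply[OF g0bl] f'_apply[OF y0U1] pointfree_idE[OF g0(2)])
  obtain U' Vw gi g' where U': "open U'" "U' \<subseteq> U1" "y0 \<in> U'" and Vw: "open Vw" "\<Phi> y0 \<in> Vw"
      and hom: "homeomorphism U' Vw \<Phi> gi"
      and gid: "\<And>x. x \<in> Vw \<Longrightarrow> (gi has_derivative (g' x)) (at x)"
      and g'eq: "\<And>x. x \<in> Vw \<Longrightarrow> g' x = inv (blinfun_apply (f'(gi x)))"
      and bij: "\<And>x. x \<in> Vw \<Longrightarrow> bij (blinfun_apply (f'(gi x)))"
  proof -
    have derf: "\<And>x. x \<in> U1 \<Longrightarrow> (\<Phi> has_derivative blinfun_apply (f' x)) (at x)"
      by (simp add: f'_apply d\<Phi>)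
    show ?thesis
    proof (rule inverse_function_theorem[OF U1_open derf f'_cont y0U1 invf])
      fix U'' V g g'' assume a: "open U''" "U'' \<subseteq> U1" "y0 \<in> U''" "open V" "\<Phi> y0 \<in> V" "homeomorphism U'' V \<Phi> g"
        "\<And>y. y \<in> V \<Longrightarrow> (g has_derivative g'' y) (at y)"
        "\<And>y. y \<in> V \<Longrightarrow> g'' y = inv (blinfun_apply (f' (g y)))"
        "\<And>y. y \<in> V \<Longrightarrow> bij (blinfun_apply (f' (g y)))"
      show thesis by (rule that[OF a])
    qed simp
  qed
  define yof where "yof = (\<lambda>z. \<chi> I. case I of None \<Rightarrow> complex_of_real (exp (K z / 2)) | Some a \<Rightarrow> z $ a)"
  have zyof: "zof (yof z) = z" for z by (simp add: zof_def yof_def vec_eq_iff)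
  have yof_p: "yof p = y0" by (simp add: yof_def y0_def)
  have ee: "complex_of_real (exp (K z / 2)) * (complex_of_real (exp (- K z / 2)) * c) = c" for z c
    by (simp add: mult.assoc[symmetric] exp_add[symmetric] flip: of_real_mult)
  have ee1: "complex_of_real (exp (K z / 2)) * complex_of_real (exp (- (K z / 2))) = 1" for z
    by (simp flip: of_real_mult exp_add)
  have Phi_yof: "\<Phi> (yof z) = X z" for z
    by (simp add: \<Phi>_def h_def zyof vec_eq_iff) (simp add: yof_def ee ee1)
  have G_yof: "G (yof z) = F z" for z
    by (simp add: G_def f_def zyof vec_eq_iff) (simp add: yof_def ee ee1)
  have yof_cont: "continuous_on U yof"
    unfolding yof_def
  proof (intro continuous_on_vec_lambda)
    fix I :: "'n option"
    show "continuous_on U (\<lambda>z. case I of None \<Rightarrow> complex_of_real (exp (K z / 2)) | Some a \<Rightarrow> z $ a)"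
      by (cases I) (auto intro!: continuous_intros Kcont)
  qed
  define V where "V = yof -` U' \<inter> U"
  have V_open: "open V"
    using continuous_on_open_vimage[OF U_open] yof_cont U'(1) unfolding V_def by blast
  have pV: "p \<in> V" using p yof_p U'(3) by (simp add: V_def)
  have VU: "V \<subseteq> U" by (auto simp: V_def)
  define Ft where "Ft = (\<lambda>x. G (gi x))"
  have XV: "X ` V \<subseteq> Vw"
  proof
    fix x assume "x \<in> X ` V"
    then obtain z where z: "z \<in> V" "x = X z" by blast
    then have "yof z \<in> U'" by (simp add: V_def)
    then have "\<Phi> (yof z) \<in> Vw" using homeomorphism_image1[OF hom] by blast
    then show "x \<in> Vw" using z Phi_yof by simp
  qed
  have FtX: "Ft (X z) = F z" if "z \<in> V" for z
  proof -
    have "yof z \<in> U'" using that by (simp add: V_def)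
    then have "gi (\<Phi> (yof z)) = yof z" by (rule homeomorphism_apply1[OF hom])
    then show ?thesis by (simp add: Ft_def Phi_yof[symmetric] G_yof)
  qed
  have clinP: "D\<Phi> y (c *s w) = c *s D\<Phi> y w" for y c w
    by (simp add: D\<Phi>_def vec_eq_iff sum_distrib_left algebra_simps)
  have clinG: "DG y (c *s w) = c *s DG y w" for y c w
    by (simp add: DG_def vec_eq_iff sum_distrib_left algebra_simps)
  define L where "L = (\<lambda>x v. DG (gi x) (inv (D\<Phi> (gi x)) v))"
  have giU: "gi x \<in> U'" if "x \<in> Vw" for x using homeomorphism_image2[OF hom] that by blast
  have giU1: "gi x \<in> U1" if "x \<in> Vw" for x using giU[OF that] U'(2) by blast
  have bijx: "bij (D\<Phi> (gi x))" if "x \<in> Vw" for x using bij[OF that] f'_apply[OF giU1[OF that]] by simp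
  have dFt: "(Ft has_derivative L x) (at x)" if "x \<in> Vw" for x
  proof -
    have "g' x = inv (D\<Phi> (gi x))" using g'eq[OF that] f'_apply[OF giU1[OF that]] by simp
    then show ?thesis
      using has_derivative_compose[OF gid[OF that] dG[OF giU1[OF that]]]
      unfolding Ft_def L_def by simp
  qed
  have clinL: "L x (c *s v) = c *s L x v" if "x \<in> Vw" for x c v
    unfolding L_def by (simp add: inv_clin[OF bijx[OF that] clinP] clinG)
  have linL: "linear (L x)" if "x \<in> Vw" for x
    using dFt[OF that] has_derivative_bounded_linear bounded_linear.linear by blast
  have compd: "((\<lambda>x. Ft x $ I) has_derivative (\<lambda>v. L x v $ I)) (at x)" if "x \<in> Vw" for x I
    using bounded_linear.has_derivative[OF bounded_linear_vec_nth dFt[OF that]] by simp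
  have repr: "L x v $ I = (\<Sum>J\<in>UNIV. v$J * (L x (axis J 1) $ I))" if "x \<in> Vw" for x v I
    by (rule holo_from_clin[OF linL[OF that] clinL[OF that]])
  have homL: "L x x = Ft x" if "x \<in> Vw" for x
  proof -
    define y where "y = gi x"
    have xy: "x = \<Phi> y" using homeomorphism_apply2[OF hom that] by (simp add: y_def)
    define e where "e = (axis None (y $ None) :: complex^'n option)"
    have De: "D\<Phi> y e = \<Phi> y" by (simp add: D\<Phi>_def \<Phi>_def e_def vec_eq_iff axis_def)
    have injy: "inj (D\<Phi> y)" using bij_is_inj[OF bijx[OF that]] by (simp only: y_def)
    have "inv (D\<Phi> y) (D\<Phi> y e) = e" by (rule inv_f_f[OF injy])
    then have "inv (D\<Phi> y) x = e" using De xy by simp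
    then have "L x x = DG y e" by (simp add: L_def y_def)
    also have "\<dots> = G y" by (simp add: DG_def G_def e_def vec_eq_iff axis_def)
    finally show ?thesis by (simp add: Ft_def y_def)
  qed
  show "\<exists>V W (Ft :: complex^'n option \<Rightarrow> complex^'n option).
           open V \<and> p \<in> V \<and> V \<subseteq> U \<and> open W \<and> X ` V \<subseteq> W \<and>
           (\<forall>I. holo_on (\<lambda>x. Ft x $ I) W) \<and>
           (\<forall>z\<in>V. Ft (X z) = F z) \<and>
           (\<forall>x\<in>W. \<forall>I. Ft x $ I = (\<Sum>J\<in>UNIV. x $ J * cpartial (\<lambda>y. Ft y $ I) J x))"
  proof (intro exI conjI)
    show "\<forall>I. holo_on (\<lambda>x. Ft x $ I) Vw"
      unfolding holo_on_def
    proof (intro allI ballI)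
      fix I x assume x: "x \<in> Vw"
      have "((\<lambda>x. Ft x $ I) has_derivative (\<lambda>h. \<Sum>J\<in>UNIV. h $ J * (\<chi> J. L x (axis J 1) $ I) $ J)) (at x)"
        by (rule has_derivative_eq_rhs[OF compd[OF x, of I]]) (rule ext, simp only: vec_lambda_beta, rule repr[OF x])
      then show "\<exists>D. ((\<lambda>x. Ft x $ I) has_derivative (\<lambda>h. \<Sum>J\<in>UNIV. h $ J * D $ J)) (at x)" by blast
    qed
    show "\<forall>x\<in>Vw. \<forall>I. Ft x $ I = (\<Sum>J\<in>UNIV. x $ J * cpartial (\<lambda>y. Ft y $ I) J x)"
    proof (intro allI ballI)
      fix I x assume x: "x \<in> Vw"
      have cp: "cpartial (\<lambda>y. Ft y $ I) J x = L x (axis J 1) $ I" for J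
        unfolding cpartial_def using fun_cong[OF frechet_derivative_at[OF compd[OF x, of I]], of "axis J 1"] by simp
      show "Ft x $ I = (\<Sum>J\<in>UNIV. x $ J * cpartial (\<lambda>y. Ft y $ I) J x)"
      proof -
        have "Ft x $ I = L x x $ I" using homL[OF x] by simp
        also have "\<dots> = (\<Sum>J\<in>UNIV. x$J * (L x (axis J 1) $ I))" by (rule repr[OF x])
        finally show ?thesis unfolding cp .
      qed
    qed
  qed (use V_open pV VU Vw(1) XV FtX in auto)
qed

end
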